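(* Let $R=k[x_1,\ldots,x_n]$ and let $(h_0,h_1,\ldots,h_s)$ be the $h$-vector of a graded Artinian level algebra $A=R/I$ with socle degree $s$. Suppose that $h_{d-1}>h_d$ for some $d\geq r_1(A)$. Then (a) $h_{d-1}>h_d>\cdots>h_{s-1}>h_s>0$, and (b) $h_{t-1}-h_t\leq (n-1)(h_t-h_{t+1})$ for all $d\le t\le s$ (where $h_{s+1}=0$).
   Context: $k$ is an infinite field of characteristic $0$. $h_i=\dim_k A_i$, and $s$ is the largest degree with $A_s\ne0$ (the socle degree). The socle of $A$ is $\{a\in A: a\mathfrak m=0\}$ with $\mathfrak m$ the maximal homogeneous ideal; $A$ is level if its socle is concentrated in a single degree. The reduction number $r_1(A)=\min\{\ell:(R/(I+(L)))_{\ell+1}=0\}$ for a general linear form $L$ (equivalently $\min\{\ell: x_{n-1}^{\ell+1}\in\mathrm{Gin}(I)\}$, $\mathrm{Gin}$ taken with respect to degree reverse lexicographic order). *)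

theory Defs
  imports Complex_Main "HOL-Library.Poly_Mapping"
begin

text \<open>Polynomials over a field 'k in the variables x_0, x_1, ... :
  monomials are exponent vectors (finitely supported maps nat to nat), polynomials are finitely
  supported coefficient functions on monomials.\<close>

type_synonym 'k mpoly = "(nat \<Rightarrow>\<^sub>0 nat) \<Rightarrow>\<^sub>0 'k"

definition mdeg :: "(nat \<Rightarrow>\<^sub>0 nat) \<Rightarrow> nat" where
  "mdeg m = (\<Sum>i\<in>Poly_Mapping.keys m. Poly_Mapping.lookup m i)"

definition polyring :: "nat \<Rightarrow> 'k::field mpoly set" where
  "polyring n = {p. \<forall>m\<in>Poly_Mapping.keys p. Poly_Mapping.keys m \<subseteq> {..<n}}"

definition hompart :: "nat \<Rightarrow> nat \<Rightarrow> 'k::field mpoly set" where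
  "hompart n j = {p \<in> polyring n. \<forall>m\<in>Poly_Mapping.keys p. mdeg m = j}"

definition homcomp :: "nat \<Rightarrow> 'k::field mpoly \<Rightarrow> 'k mpoly" where
  "homcomp j p = (\<Sum>m\<in>{m\<in>Poly_Mapping.keys p. mdeg m = j}. Poly_Mapping.single m (Poly_Mapping.lookup p m))"

definition var :: "nat \<Rightarrow> 'k::field mpoly" where
  "var i = Poly_Mapping.single (Poly_Mapping.single i 1) 1"

definition scal :: "'k::field \<Rightarrow> 'k mpoly \<Rightarrow> 'k mpoly" where
  "scal c p = Poly_Mapping.map (\<lambda>a. c * a) p"

definition kdim :: "'k::field mpoly set \<Rightarrow> nat" where
  "kdim V = vector_space.dim scal V"

definition is_ideal :: "nat \<Rightarrow> 'k::field mpoly set \<Rightarrow> bool" where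
  "is_ideal n I \<longleftrightarrow> I \<subseteq> polyring n \<and> 0 \<in> I \<and>
     (\<forall>p\<in>I. \<forall>q\<in>I. p + q \<in> I) \<and> (\<forall>r\<in>polyring n. \<forall>p\<in>I. r * p \<in> I)"

definition homogeneous_ideal :: "nat \<Rightarrow> 'k::field mpoly set \<Rightarrow> bool" where
  "homogeneous_ideal n I \<longleftrightarrow> is_ideal n I \<and> (\<forall>p\<in>I. \<forall>j. homcomp j p \<in> I)"

text \<open>A = R/I is a graded Artinian k-algebra (nonzero): I is a proper homogeneous
  ideal and A_N = 0 for some N.\<close>
definition graded_artinian :: "nat \<Rightarrow> 'k::field mpoly set \<Rightarrow> bool" where
  "graded_artinian n I \<longleftrightarrow> homogeneous_ideal n I \<and> 1 \<notin> I \<and>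
     (\<exists>N. hompart n N \<subseteq> I)"

text \<open>h_j = dim_k A_j = dim_k (R_j / I_j) = dim_k R_j - dim_k (I \<inter> R_j).\<close>
definition hvec :: "nat \<Rightarrow> 'k::field mpoly set \<Rightarrow> nat \<Rightarrow> nat" where
  "hvec n I j = kdim (hompart n j :: 'k mpoly set) - kdim (I \<inter> hompart n j)"

text \<open>Socle of A (as preimages in R): a with a * m = 0, i.e. x_i a \<in> I for all i.\<close>
definition socle_pre :: "nat \<Rightarrow> 'k::field mpoly set \<Rightarrow> 'k mpoly set" where
  "socle_pre n I = {p \<in> polyring n. \<forall>i<n. var i * p \<in> I}"

text \<open>Level: the socle is concentrated in a single degree j, i.e. every socle
  element lies in A_j (its class agrees with that of its degree-j component).\<close>
definition level :: "nat \<Rightarrow> 'k::field mpoly set \<Rightarrow> bool" where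
  "level n I \<longleftrightarrow> (\<exists>j. \<forall>p\<in>socle_pre n I. p - homcomp j p \<in> I)"

definition linform :: "nat \<Rightarrow> (nat \<Rightarrow> 'k::field) \<Rightarrow> 'k mpoly" where
  "linform n c = (\<Sum>i<n. Poly_Mapping.single (Poly_Mapping.single i 1) (c i))"

definition ideal_plus_lin :: "nat \<Rightarrow> 'k::field mpoly set \<Rightarrow> 'k mpoly \<Rightarrow> 'k mpoly set" where
  "ideal_plus_lin n I L = {a + r * L | a r. a \<in> I \<and> r \<in> polyring n}"

definition red_num_wrt :: "nat \<Rightarrow> 'k::field mpoly set \<Rightarrow> 'k mpoly \<Rightarrow> nat" where
  "red_num_wrt n I L = (LEAST l. hompart n (l + 1) \<subseteq> ideal_plus_lin n I L)"

definition meval :: "'k::field mpoly \<Rightarrow> (nat \<Rightarrow> 'k) \<Rightarrow> 'k" where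
  "meval f c = (\<Sum>m\<in>Poly_Mapping.keys f. Poly_Mapping.lookup f m * (\<Prod>i\<in>Poly_Mapping.keys m. c i ^ Poly_Mapping.lookup m i))"

text \<open>r_1(A): the value of red_num_wrt for a general linear form L, i.e. the
  value attained on a nonempty Zariski open subset {c. f(c) \<noteq> 0}, f \<noteq> 0,
  of the space k^n of coefficient vectors.\<close>
definition r1 :: "nat \<Rightarrow> 'k::field mpoly set \<Rightarrow> nat" where
  "r1 n I = (THE r. \<exists>f::'k mpoly. f \<in> polyring n \<and> f \<noteq> 0 \<and>
       (\<forall>c. meval f c \<noteq> 0 \<longrightarrow> red_num_wrt n I (linform n c) = r))"

end

theory Submission
  imports Defs Complex_Main "Jordan_Normal_Form.Determinant" "HOL-Computational_Algebra.Polynomial"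
begin

context vector_space begin

lemma dim_le_fin:
  assumes "S \<subseteq> T" "T \<subseteq> span F" "finite F"
  shows "dim S \<le> dim T"
proof -
  obtain B where B: "B \<subseteq> S" "independent B" "S \<subseteq> span B" "card B = dim S"
    using basis_exists by blast
  obtain C where C: "C \<subseteq> T" "independent C" "T \<subseteq> span C" "card C = dim T"
    using basis_exists by blast
  have "finite C" using independent_span_bound[OF assms(3) C(2)] C(1) assms(2) by auto
  moreover have "B \<subseteq> span C" using B(1) assms(1) C(3) by auto
  ultimately show ?thesis using independent_span_bound[OF _ B(2)] B(4) C(4) by metis
qed

lemma dim_eq_fin_subset:
  assumes "S \<subseteq> T" "T \<subseteq> span F" "finite F" "dim S = dim T" "subspace S"
  shows "T \<subseteq> S"
proof -
  obtain B where B: "B \<subseteq> S" "independent B" "S \<subseteq> span B" "card B = dim S"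
    using basis_exists by blast
  obtain C where C: "B \<subseteq> C" "C \<subseteq> T" "independent C" "T \<subseteq> span C"
    using maximal_independent_subset_extend[of B T] B assms(1) by blast
  have fC: "finite C" using independent_span_bound[OF assms(3) C(3)] C(2) assms(2) by auto
  have "card C = dim T" using basis_card_eq_dim[OF C(2) C(4) C(3)] .
  then have "card C = card B" using B(4) assms(4) by simp
  then have "C = B" using C(1) fC by (metis card_subset_eq)
  then have "T \<subseteq> span B" using C(4) by simp
  also have "span B \<subseteq> S" using span_minimal[OF B(1) assms(5)] .
  finally show ?thesis .
qed

lemma core:
  assumes V: "subspace V" "V \<subseteq> span F" "finite F"
    and U: "subspace U" "U \<subseteq> span G" "finite G"
    and fadd: "\<And>x y. f (x + y) = f x + f y" and fsc: "\<And>c x. f (c *s x) = c *s f x"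
  shows "dim V + dim U = dim {v \<in> V. f v \<in> U} + dim {f v + u | v u. v \<in> V \<and> u \<in> U}"
proof -
  define V0 where "V0 = {v \<in> V. f v \<in> U}"
  define S where "S = {f v + u | v u. v \<in> V \<and> u \<in> U}"
  have f0: "f 0 = 0" using fadd[of 0 0] by simp
  have fsum: "f (\<Sum>x\<in>A. h x) = (\<Sum>x\<in>A. f (h x))" for A h
    by (induction A rule: infinite_finite_induct) (auto simp: f0 fadd)
  have fneg: "f (- x) = - f x" for x using fadd[of x "-x"] f0 by (simp add: eq_neg_iff_add_eq_0 add.commute)
  have sV: "span V = V" and sU: "span U = U" using V U by auto
  have V0sub: "subspace V0" unfolding V0_def using V(1) U(1)
    by (auto simp: subspace_def fadd fsc f0)
  obtain B0 where B0: "B0 \<subseteq> V0" "independent B0" "V0 \<subseteq> span B0" "card B0 = dim V0"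
    using basis_exists by blast
  obtain B where B: "B0 \<subseteq> B" "B \<subseteq> V" "independent B" "V \<subseteq> span B"
    using maximal_independent_subset_extend[of B0 V] B0 unfolding V0_def by blast
  obtain C where C: "C \<subseteq> U" "independent C" "U \<subseteq> span C" "card C = dim U"
    using basis_exists by blast
  have fB: "finite B" using independent_span_bound[OF V(3) B(3)] B(2) V(2) by auto
  have fC: "finite C" using independent_span_bound[OF U(3) C(2)] C(1) U(2) by auto
  have fB0: "finite B0" using B(1) fB finite_subset by auto
  have cB: "card B = dim V" using basis_card_eq_dim[OF B(2) B(4) B(3)] .
  define B1 where "B1 = B - B0"
  define X where "X = Inl ` B1 \<union> Inr ` C"
  define g where "g = case_sum f id"
  have fX: "finite X" unfolding X_def B1_def using fB fC by auto
  have spC: "span C \<subseteq> U" using span_minimal[OF C(1) U(1)] .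
  have fam: "\<forall>x\<in>X. a x = 0" if sa: "(\<Sum>x\<in>X. a x *s g x) = 0" for a
  proof -
    have "(\<Sum>x\<in>X. a x *s g x) = (\<Sum>x\<in>Inl ` B1. a x *s g x) + (\<Sum>x\<in>Inr ` C. a x *s g x)"
      unfolding X_def by (rule sum.union_disjoint) (use fB fC B1_def in auto)
    also have "(\<Sum>x\<in>Inl ` B1. a x *s g x) = (\<Sum>b\<in>B1. a (Inl b) *s f b)"
      by (subst sum.reindex) (auto simp: g_def)
    also have "(\<Sum>x\<in>Inr ` C. a x *s g x) = (\<Sum>c\<in>C. a (Inr c) *s c)"
      by (subst sum.reindex) (auto simp: g_def)
    finally have eq: "(\<Sum>b\<in>B1. a (Inl b) *s f b) + (\<Sum>c\<in>C. a (Inr c) *s c) = 0" using sa by simp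
    define w where "w = (\<Sum>b\<in>B1. a (Inl b) *s b)"
    have fw: "f w = - (\<Sum>c\<in>C. a (Inr c) *s c)"
      using eq unfolding w_def fsum fsc by (simp add: eq_neg_iff_add_eq_0)
    have "(\<Sum>c\<in>C. a (Inr c) *s c) \<in> U"
      using spC by (intro subsetD[OF spC] span_sum span_scale span_base) auto
    then have "f w \<in> U" using fw U(1) by (simp add: subspace_neg)
    moreover have "w \<in> V" unfolding w_def using B(2) B1_def
      by (subst sV[symmetric], intro span_sum span_scale span_base) auto
    ultimately have "w \<in> span B0" using B0(3) V0_def by auto
    then obtain \<beta> where beta: "w = (\<Sum>b\<in>B0. \<beta> b *s b)" using span_finite[OF fB0] by auto
    define \<gamma> where "\<gamma> b = (if b \<in> B1 then a (Inl b) else - \<beta> b)" for b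
    have "(\<Sum>b\<in>B. \<gamma> b *s b) = (\<Sum>b\<in>B1. \<gamma> b *s b) + (\<Sum>b\<in>B0. \<gamma> b *s b)"
      using sum.subset_diff[OF B(1) fB, of "\<lambda>b. \<gamma> b *s b"] unfolding B1_def by simp
    also have "(\<Sum>b\<in>B1. \<gamma> b *s b) = w" unfolding w_def \<gamma>_def by simp
    also have "(\<Sum>b\<in>B0. \<gamma> b *s b) = - w" unfolding beta \<gamma>_def B1_def
      by (simp add: sum_negf[symmetric])
    finally have "(\<Sum>b\<in>B. \<gamma> b *s b) = 0" by simp
    then have g0: "\<gamma> b = 0" if "b \<in> B" for b using independentD[OF B(3) fB _ _ that] by simp
    then have a1: "a (Inl b) = 0" if "b \<in> B1" for b using that B1_def \<gamma>_def by (metis DiffD1)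
    then have "(\<Sum>c\<in>C. a (Inr c) *s c) = 0" using eq by simp
    then have a2: "a (Inr c) = 0" if "c \<in> C" for c using independentD[OF C(2) fC _ _ that] by simp
    show ?thesis using a1 a2 X_def by auto
  qed
  have inj: "inj_on g X"
  proof (rule inj_onI, rule ccontr)
    fix x y assume xy: "x \<in> X" "y \<in> X" "g x = g y" "x \<noteq> y"
    define a where "a z = (if z = x then 1 else if z = y then -1 else (0::'a))" for z
    have "a z *s g z = (if z = x then g x else 0) + (if z = y then - g y else 0)" for z
      using xy(4) by (auto simp: a_def)
    then have "(\<Sum>z\<in>X. a z *s g z) = g x - g y" using xy(1,2) fX
      by (simp add: sum.distrib)
    then have "a x = 0" using fam xy by auto
    then show False by (simp add: a_def)
  qed
  have indep: "independent (g ` X)"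
    unfolding independent_explicit_module
  proof (intro allI impI)
    fix t u v assume t: "finite t" "t \<subseteq> g ` X" "(\<Sum>v\<in>t. u v *s v) = 0" "v \<in> t"
    define a where "a z = (if g z \<in> t then u (g z) else (0::'a))" for z
    have "(\<Sum>z\<in>X. a z *s g z) = (\<Sum>z\<in>X \<inter> g -` t. u (g z) *s g z)"
      unfolding a_def by (rule sum.mono_neutral_cong_right) (use fX in auto)
    also have "\<dots> = (\<Sum>v\<in>g ` (X \<inter> g -` t). u v *s v)"
      using sum.reindex[of g "X \<inter> g -` t" "\<lambda>v. u v *s v"] inj_on_subset[OF inj, of "X \<inter> g -` t"]
      by auto
    also have "g ` (X \<inter> g -` t) = t" using t(2) by auto
    finally have "(\<Sum>z\<in>X. a z *s g z) = 0" using t(3) by simp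
    then have "\<forall>z\<in>X. a z = 0" by (rule fam)
    moreover obtain z where "z \<in> X" "v = g z" using t(2,4) by auto
    ultimately show "u v = 0" using t(4) a_def by auto
  qed
  have sub1: "g ` X \<subseteq> S"
  proof
    fix y assume "y \<in> g ` X"
    then obtain x where x: "x \<in> X" "y = g x" by auto
    show "y \<in> S"
    proof (cases x)
      case (Inl b)
      then have "b \<in> V" using x B(2) X_def B1_def by auto
      moreover have "0 \<in> U" using U(1) by (simp add: subspace_0)
      ultimately show ?thesis unfolding S_def using x Inl g_def by force
    next
      case (Inr c)
      then have "c \<in> U" using x C(1) X_def by auto
      moreover have "0 \<in> V" using V(1) by (simp add: subspace_0)
      then have "f 0 + c \<in> S" unfolding S_def using \<open>0 \<in> V\<close> \<open>c \<in> U\<close> by blast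
      then show ?thesis using x Inr g_def f0 by simp
    qed
  qed
  have sub2: "S \<subseteq> span (g ` X)"
  proof
    fix s assume "s \<in> S"
    then obtain v u where vu: "s = f v + u" "v \<in> V" "u \<in> U" unfolding S_def by auto
    obtain \<alpha> where alpha: "v = (\<Sum>b\<in>B. \<alpha> b *s b)" using vu(2) B(4) span_finite[OF fB] by auto
    define w0 where "w0 = (\<Sum>b\<in>B0. \<alpha> b *s b)"
    have "v = (\<Sum>b\<in>B1. \<alpha> b *s b) + w0"
      using alpha sum.subset_diff[OF B(1) fB, of "\<lambda>b. \<alpha> b *s b"] unfolding B1_def w0_def by simp
    then have fv: "f v = (\<Sum>b\<in>B1. \<alpha> b *s f b) + f w0" by (simp add: fadd fsum fsc)
    have "w0 \<in> span B0" unfolding w0_def by (intro span_sum span_scale span_base) auto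
    then have "w0 \<in> V0" using span_minimal[OF B0(1) V0sub] by auto
    then have "f w0 + u \<in> U" using vu(3) U(1) V0_def by (simp add: subspace_add)
    then have "f w0 + u \<in> span (g ` X)"
      using C(3) span_mono[of C "g ` X"] X_def g_def by force
    moreover have "(\<Sum>b\<in>B1. \<alpha> b *s f b) \<in> span (g ` X)"
    proof (intro span_sum span_scale span_base)
      fix b assume "b \<in> B1" then show "f b \<in> g ` X" unfolding X_def g_def by force
    qed
    moreover have "s = (\<Sum>b\<in>B1. \<alpha> b *s f b) + (f w0 + u)" using vu(1) fv by (simp add: add.assoc)
    ultimately show "s \<in> span (g ` X)" by (simp add: span_add)
  qed
  have dS: "dim S = card (g ` X)" using basis_card_eq_dim[OF sub1 sub2 indep] by simp
  have "card (g ` X) = card X" using card_image[OF inj] .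
  also have "card X = card B1 + card C" unfolding X_def
  proof -
    have "card (Inl ` B1 \<union> Inr ` C) = card (Inl ` B1 :: ('b + 'b) set) + card (Inr ` C :: ('b + 'b) set)"
      by (rule card_Un_disjoint) (use fB fC B1_def in auto)
    then show "card (Inl ` B1 \<union> Inr ` C) = card B1 + card C"
      by (simp add: card_image)
  qed
  also have "card B1 = card B - card B0" unfolding B1_def using B(1) fB0 by (simp add: card_Diff_subset)
  finally have "dim S = card B - card B0 + card C" using dS by simp
  moreover have "card B0 \<le> card B" using B(1) fB card_mono by auto
  ultimately show ?thesis using cB B0(4) C(4) unfolding S_def V0_def by simp
qed

end

lemma scal_conv: "scal c p = Poly_Mapping.single 0 c * p"
  unfolding scal_def by (metis mult_map_scale_conv_mult)

lemma lookup_scal[simp]: "Poly_Mapping.lookup (scal c p) m = c * Poly_Mapping.lookup p m"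
  unfolding scal_def by (simp add: map.rep_eq when_def)

interpretation vs: vector_space "scal :: 'k::field \<Rightarrow> 'k mpoly \<Rightarrow> 'k mpoly"
proof unfold_locales
  fix a b :: 'k and x y :: "'k mpoly"
  show "scal a (x + y) = scal a x + scal a y" by (simp add: scal_conv algebra_simps)
  show "scal (a + b) x = scal a x + scal b x" by (simp add: scal_conv algebra_simps single_add)
  have "Poly_Mapping.single 0 a * Poly_Mapping.single 0 b = (Poly_Mapping.single 0 (a * b) :: 'k mpoly)"
    by (simp add: mult_single)
  then show "scal a (scal b x) = scal (a * b) x" by (simp add: scal_conv mult.assoc[symmetric])
  show "scal 1 x = x" by (simp add: scal_conv)
qed

lemma kdim_vs: "kdim V = vs.dim V"
  unfolding kdim_def ..

lemma keys_scal: "Poly_Mapping.keys (scal c p) \<subseteq> Poly_Mapping.keys p"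
  by (auto simp: in_keys_iff)

lemma poly_sum_single:
  "(\<Sum>m\<in>Poly_Mapping.keys p. Poly_Mapping.single m (Poly_Mapping.lookup p m)) = p"
proof (rule poly_mapping_eqI)
  fix k
  have "(\<Sum>m\<in>Poly_Mapping.keys p. Poly_Mapping.lookup (Poly_Mapping.single m (Poly_Mapping.lookup p m)) k)
      = (\<Sum>m\<in>Poly_Mapping.keys p. if m = k then Poly_Mapping.lookup p m else 0)"
    by (intro sum.cong) (auto simp: lookup_single when_def)
  also have "\<dots> = Poly_Mapping.lookup p k" by (simp add: in_keys_iff)
  finally show "Poly_Mapping.lookup (\<Sum>m\<in>Poly_Mapping.keys p. Poly_Mapping.single m (Poly_Mapping.lookup p m)) k
      = Poly_Mapping.lookup p k" by (simp add: lookup_sum)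
qed

lemma single_scal: "Poly_Mapping.single m c = scal c (Poly_Mapping.single m (1::'k::field))"
  by (rule poly_mapping_eqI) (simp add: lookup_single when_def)

lemma keys_add_nat: "Poly_Mapping.keys (a + b :: nat \<Rightarrow>\<^sub>0 nat) = Poly_Mapping.keys a \<union> Poly_Mapping.keys b"
  by (auto simp: in_keys_iff lookup_add)

lemma mdeg_sum: "finite S \<Longrightarrow> Poly_Mapping.keys m \<subseteq> S \<Longrightarrow> mdeg m = sum (Poly_Mapping.lookup m) S"
  unfolding mdeg_def by (rule sum.mono_neutral_left) (auto simp: in_keys_iff)

lemma mdeg_add: "mdeg (a + b) = mdeg a + mdeg b"
proof -
  let ?S = "Poly_Mapping.keys a \<union> Poly_Mapping.keys b"
  have "mdeg (a + b) = sum (Poly_Mapping.lookup (a + b)) ?S" by (rule mdeg_sum) (auto simp: keys_add_nat)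
  also have "\<dots> = sum (Poly_Mapping.lookup a) ?S + sum (Poly_Mapping.lookup b) ?S"
    by (simp add: lookup_add sum.distrib)
  also have "\<dots> = mdeg a + mdeg b" using mdeg_sum[of ?S a] mdeg_sum[of ?S b] by simp
  finally show ?thesis .
qed

lemma mdeg_single[simp]: "mdeg (Poly_Mapping.single i k) = k"
  unfolding mdeg_def by simp

lemma mdeg_zero[simp]: "mdeg 0 = 0"
  unfolding mdeg_def by simp

lemma lookup_le_mdeg: "Poly_Mapping.lookup m i \<le> mdeg m"
proof (cases "i \<in> Poly_Mapping.keys m")
  case True then show ?thesis unfolding mdeg_def by (intro member_le_sum) auto
next
  case False then show ?thesis by (simp add: in_keys_iff)
qed

section \<open>Homogeneity\<close>

definition ishom :: "nat \<Rightarrow> 'k::field mpoly \<Rightarrow> bool" where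
  "ishom j p \<longleftrightarrow> (\<forall>m\<in>Poly_Mapping.keys p. mdeg m = j)"

lemma hompart_iff: "p \<in> hompart n j \<longleftrightarrow> p \<in> polyring n \<and> ishom j p"
  unfolding hompart_def ishom_def by auto

lemma ishom_0[simp]: "ishom j 0" unfolding ishom_def by simp

lemma ishom_add: "ishom j p \<Longrightarrow> ishom j q \<Longrightarrow> ishom j (p + q)"
  unfolding ishom_def using keys_add[of p q] by blast

lemma ishom_scal: "ishom j p \<Longrightarrow> ishom j (scal c p)"
  unfolding ishom_def using keys_scal[of c p] by blast

lemma ishom_uminus: "ishom j p \<Longrightarrow> ishom j (- p)"
  unfolding ishom_def by simp

lemma ishom_sum: "(\<And>x. x \<in> A \<Longrightarrow> ishom j (f x)) \<Longrightarrow> ishom j (sum f A)"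
  by (induction A rule: infinite_finite_induct) (auto intro: ishom_add)

lemma ishom_single: "ishom (mdeg m) (Poly_Mapping.single m c)"
  unfolding ishom_def by simp

lemma ishom_mult: assumes "ishom a p" "ishom b q" shows "ishom (a + b) (p * q)"
  unfolding ishom_def
proof
  fix m assume m: "m \<in> Poly_Mapping.keys (p * q)"
  then obtain x y where "m = x + y" "x \<in> Poly_Mapping.keys p" "y \<in> Poly_Mapping.keys q"
    using keys_mult[of p q] by blast
  then show "mdeg m = a + b" using assms unfolding ishom_def by (simp add: mdeg_add)
qed

lemma polyring_0[simp]: "0 \<in> polyring n" unfolding polyring_def by simp

lemma polyring_add: "p \<in> polyring n \<Longrightarrow> q \<in> polyring n \<Longrightarrow> p + q \<in> polyring n"
  unfolding polyring_def using keys_add[of p q] by blast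

lemma polyring_uminus: "p \<in> polyring n \<Longrightarrow> - p \<in> polyring n"
  unfolding polyring_def by simp

lemma polyring_diff: "p \<in> polyring n \<Longrightarrow> q \<in> polyring n \<Longrightarrow> p - q \<in> polyring n"
  using polyring_add[of p n "- q"] polyring_uminus[of q n] by simp

lemma polyring_scal: "p \<in> polyring n \<Longrightarrow> scal c p \<in> polyring n"
  unfolding polyring_def using keys_scal[of c p] by blast

lemma polyring_sum: "(\<And>x. x \<in> A \<Longrightarrow> f x \<in> polyring n) \<Longrightarrow> sum f A \<in> polyring n"
  by (induction A rule: infinite_finite_induct) (auto intro: polyring_add)

lemma polyring_mult: assumes "p \<in> polyring n" "q \<in> polyring n" shows "p * q \<in> polyring n"
  unfolding polyring_def
proof (intro CollectI ballI)
  fix m assume m: "m \<in> Poly_Mapping.keys (p * q)"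
  then obtain x y where "m = x + y" "x \<in> Poly_Mapping.keys p" "y \<in> Poly_Mapping.keys q"
    using keys_mult[of p q] by blast
  then show "Poly_Mapping.keys m \<subseteq> {..<n}" using assms unfolding polyring_def by (simp add: keys_add_nat)
qed

lemma polyring_single: "Poly_Mapping.keys m \<subseteq> {..<n} \<Longrightarrow> Poly_Mapping.single m c \<in> polyring n"
  unfolding polyring_def by simp

lemma polyring_const: "Poly_Mapping.single 0 c \<in> polyring n"
  by (rule polyring_single) simp

lemma polyring_one[simp]: "1 \<in> polyring n"
  using polyring_const[of 1 n] by simp

lemma polyring_prod: "(\<And>x. x \<in> A \<Longrightarrow> f x \<in> polyring n) \<Longrightarrow> prod f A \<in> polyring n"
  by (induction A rule: infinite_finite_induct) (auto intro: polyring_mult)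

lemma hompart_add: "p \<in> hompart n j \<Longrightarrow> q \<in> hompart n j \<Longrightarrow> p + q \<in> hompart n j"
  by (simp add: hompart_iff polyring_add ishom_add)

lemma hompart_scal: "p \<in> hompart n j \<Longrightarrow> scal c p \<in> hompart n j"
  by (simp add: hompart_iff polyring_scal ishom_scal)

lemma hompart_0[simp]: "0 \<in> hompart n j"
  by (simp add: hompart_iff)

lemma hompart_mult: "p \<in> hompart n a \<Longrightarrow> q \<in> hompart n b \<Longrightarrow> p * q \<in> hompart n (a + b)"
  by (simp add: hompart_iff polyring_mult ishom_mult)

lemma hompart_sum: "(\<And>x. x \<in> A \<Longrightarrow> f x \<in> hompart n j) \<Longrightarrow> sum f A \<in> hompart n j"
  by (induction A rule: infinite_finite_induct) (auto intro: hompart_add)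

lemma subspace_hompart: "vs.subspace (hompart n j)"
  by (rule vs.subspaceI) (simp_all add: hompart_add hompart_scal)

lemma lookup_homcomp:
  "Poly_Mapping.lookup (homcomp j p) m = (if mdeg m = j then Poly_Mapping.lookup p m else 0)"
proof -
  have "Poly_Mapping.lookup (homcomp j p) m =
     (\<Sum>m'\<in>{m' \<in> Poly_Mapping.keys p. mdeg m' = j}. if m' = m then Poly_Mapping.lookup p m' else 0)"
    unfolding homcomp_def lookup_sum by (intro sum.cong) (auto simp: lookup_single when_def)
  also have "\<dots> = (if mdeg m = j then Poly_Mapping.lookup p m else 0)"
    by (auto simp: in_keys_iff)
  finally show ?thesis .
qed

lemma homcomp_add: "homcomp j (p + q) = homcomp j p + homcomp j q"
  by (rule poly_mapping_eqI) (simp add: lookup_homcomp lookup_add)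

lemma homcomp_scal: "homcomp j (scal c p) = scal c (homcomp j p)"
  by (rule poly_mapping_eqI) (simp add: lookup_homcomp)

lemma homcomp_0[simp]: "homcomp j 0 = 0"
  by (rule poly_mapping_eqI) (simp add: lookup_homcomp)

lemma homcomp_sum: "homcomp j (sum f A) = (\<Sum>x\<in>A. homcomp j (f x))"
  by (induction A rule: infinite_finite_induct) (auto simp: homcomp_add)

lemma homcomp_id: "ishom j p \<Longrightarrow> homcomp j p = p"
  by (rule poly_mapping_eqI) (auto simp: lookup_homcomp ishom_def in_keys_iff)

lemma homcomp_other: "ishom j p \<Longrightarrow> j' \<noteq> j \<Longrightarrow> homcomp j' p = 0"
  by (rule poly_mapping_eqI) (auto simp: lookup_homcomp ishom_def in_keys_iff)

lemma ishom_homcomp: "ishom j (homcomp j p)"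
  unfolding ishom_def by (auto simp: in_keys_iff lookup_homcomp split: if_splits)

lemma keys_homcomp: "Poly_Mapping.keys (homcomp j p) \<subseteq> Poly_Mapping.keys p"
  by (auto simp: in_keys_iff lookup_homcomp split: if_splits)

lemma homcomp_hompart: "p \<in> polyring n \<Longrightarrow> homcomp j p \<in> hompart n j"
  unfolding hompart_iff using ishom_homcomp keys_homcomp unfolding polyring_def by blast

lemma homcomp_mult:
  assumes g: "ishom e g"
  shows "homcomp (j + e) (q * g) = homcomp j q * g"
proof -
  let ?t = "\<lambda>m. Poly_Mapping.single m (Poly_Mapping.lookup q m) * g"
  have "q * g = (\<Sum>m\<in>Poly_Mapping.keys q. ?t m)"
    by (subst poly_sum_single[of q, symmetric]) (simp add: sum_distrib_right)
  then have "homcomp (j + e) (q * g) = (\<Sum>m\<in>Poly_Mapping.keys q. homcomp (j + e) (?t m))"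
    by (simp add: homcomp_sum)
  also have "\<dots> = (\<Sum>m\<in>Poly_Mapping.keys q. if mdeg m = j then ?t m else 0)"
  proof (intro sum.cong refl)
    fix m
    have h: "ishom (mdeg m + e) (?t m)" by (rule ishom_mult[OF ishom_single g])
    show "homcomp (j + e) (?t m) = (if mdeg m = j then ?t m else 0)"
      using homcomp_id[OF h] homcomp_other[OF h] by auto
  qed
  also have "\<dots> = (\<Sum>m\<in>{m\<in>Poly_Mapping.keys q. mdeg m = j}. ?t m)"
    by (simp add: sum.inter_filter)
  also have "\<dots> = homcomp j q * g"
    unfolding homcomp_def by (simp add: sum_distrib_right)
  finally show ?thesis .
qed

section \<open>Monomials and finite dimensionality\<close>

definition mons :: "nat \<Rightarrow> nat \<Rightarrow> (nat \<Rightarrow>\<^sub>0 nat) set" where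
  "mons n j = {m. Poly_Mapping.keys m \<subseteq> {..<n} \<and> mdeg m = j}"

lemma finite_mons: "finite (mons n j)"
proof -
  let ?r = "\<lambda>m. restrict (Poly_Mapping.lookup m) {..<n}"
  have inj: "inj_on ?r (mons n j)"
  proof (rule inj_onI)
    fix a b assume ab: "a \<in> mons n j" "b \<in> mons n j" "?r a = ?r b"
    show "a = b"
    proof (rule poly_mapping_eqI)
      fix k show "Poly_Mapping.lookup a k = Poly_Mapping.lookup b k"
      proof (cases "k < n")
        case True then show ?thesis using fun_cong[OF ab(3), of k] by simp
      next
        case False then have "k \<notin> Poly_Mapping.keys a" "k \<notin> Poly_Mapping.keys b"
          using ab(1,2) unfolding mons_def by auto
        then show ?thesis by (simp add: in_keys_iff)
      qed
    qed
  qed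
  have "?r ` mons n j \<subseteq> PiE {..<n} (\<lambda>_. {..j})"
  proof
    fix f assume "f \<in> ?r ` mons n j"
    then obtain m where m: "m \<in> mons n j" "f = ?r m" by blast
    have "\<forall>i\<in>{..<n}. f i \<in> {..j}" using m lookup_le_mdeg[of m] unfolding mons_def by auto
    moreover have "f \<in> extensional {..<n}" using m by simp
    ultimately show "f \<in> PiE {..<n} (\<lambda>_. {..j})" by (simp add: PiE_iff)
  qed
  then have "finite (?r ` mons n j)" by (rule finite_subset) (simp add: finite_PiE)
  then show ?thesis using finite_imageD[OF _ inj] by blast
qed

definition monoms :: "nat \<Rightarrow> nat \<Rightarrow> 'k::field mpoly set" where
  "monoms n j = (\<lambda>m. Poly_Mapping.single m 1) ` mons n j"

lemma finite_monoms: "finite (monoms n j)"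
  unfolding monoms_def using finite_mons by simp

lemma mono_in_hompart: "m \<in> mons n j \<Longrightarrow> Poly_Mapping.single m c \<in> hompart n j"
  unfolding mons_def using polyring_single[of m n c] ishom_single[of m c] hompart_iff by auto

lemma hompart_span_monoms: "hompart n j \<subseteq> vs.span (monoms n j)"
proof
  fix p :: "'k::field mpoly" assume p: "p \<in> hompart n j"
  have "p = (\<Sum>m\<in>Poly_Mapping.keys p. scal (Poly_Mapping.lookup p m) (Poly_Mapping.single m 1))"
    by (subst poly_sum_single[of p, symmetric]) (simp add: single_scal[symmetric])
  also have "\<dots> \<in> vs.span (monoms n j)"
  proof (intro vs.span_sum vs.span_scale vs.span_base)
    fix m assume "m \<in> Poly_Mapping.keys p"
    then have "m \<in> mons n j" using p unfolding hompart_def polyring_def mons_def by auto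
    then show "Poly_Mapping.single m 1 \<in> monoms n j" unfolding monoms_def by auto
  qed
  finally show "p \<in> vs.span (monoms n j)" .
qed

lemma monoms_sub_hompart: "monoms n j \<subseteq> hompart n j"
  unfolding monoms_def using mono_in_hompart by blast

lemma var_hompart: "i < n \<Longrightarrow> var i \<in> hompart n 1"
  unfolding var_def by (rule mono_in_hompart) (simp add: mons_def)

lemma single_var_scal: "Poly_Mapping.single (Poly_Mapping.single i 1) c = scal c (var i)"
  unfolding var_def by (rule single_scal)

lemma linform_sum: "linform n c = (\<Sum>i<n. scal (c i) (var i))"
  unfolding linform_def by (intro sum.cong refl) (rule single_var_scal)

lemma linform_hompart: "linform n c \<in> hompart n 1"
  unfolding linform_sum by (intro hompart_sum hompart_scal var_hompart) auto

lemma scal_mult_right: "p * scal c q = scal c (p * q)"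
  by (simp add: scal_conv mult.left_commute)

lemma scal_mult_left: "scal c p * q = scal c (p * q)"
  by (simp add: scal_conv mult.assoc)

lemma hompart_polyring: "p \<in> hompart n j \<Longrightarrow> p \<in> polyring n"
  by (simp add: hompart_iff)

lemma hompart_mult': "p \<in> hompart n a \<Longrightarrow> q \<in> hompart n b \<Longrightarrow> c = a + b \<Longrightarrow> p * q \<in> hompart n c"
  using hompart_mult by blast

locale hideal =
  fixes n :: nat and I :: "'k::field mpoly set"
  assumes hom: "homogeneous_ideal n I"
begin

abbreviation RR :: "nat \<Rightarrow> 'k mpoly set" where "RR j \<equiv> hompart n j"

lemma sub: "I \<subseteq> polyring n" and zero: "0 \<in> I"
  and add: "p \<in> I \<Longrightarrow> q \<in> I \<Longrightarrow> p + q \<in> I"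
  and mult: "r \<in> polyring n \<Longrightarrow> p \<in> I \<Longrightarrow> r * p \<in> I"
  and homc: "p \<in> I \<Longrightarrow> homcomp j p \<in> I"
  using hom unfolding homogeneous_ideal_def is_ideal_def by auto

lemma scal: "p \<in> I \<Longrightarrow> scal c p \<in> I"
  unfolding scal_conv by (rule mult[OF polyring_const])

lemma uminus: "p \<in> I \<Longrightarrow> - p \<in> I"
  using scal[of p "-1"] by (simp add: scal_conv single_uminus)

lemma diff: "p \<in> I \<Longrightarrow> q \<in> I \<Longrightarrow> p - q \<in> I"
  using add[of p "- q"] uminus[of q] by simp

lemma sum: "(\<And>x. x \<in> A \<Longrightarrow> f x \<in> I) \<Longrightarrow> sum f A \<in> I"
  by (induction A rule: infinite_finite_induct) (auto intro: add zero)

definition II :: "nat \<Rightarrow> 'k mpoly set" where "II j = I \<inter> RR j"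

definition KK :: "'k mpoly \<Rightarrow> nat \<Rightarrow> 'k mpoly set" where
  "KK L j = {a \<in> RR j. L * a \<in> I}"

definition SS :: "'k mpoly \<Rightarrow> nat \<Rightarrow> 'k mpoly set" where
  "SS L t = {L * v + u | v u. v \<in> RR (t - 1) \<and> u \<in> II t}"

lemma subspace_II: "vs.subspace (II j)"
  unfolding II_def by (rule vs.subspaceI) (auto intro: add scal zero hompart_add hompart_scal)

lemma II_span: "II j \<subseteq> vs.span (monoms n j)"
  unfolding II_def using hompart_span_monoms by blast

lemma II_sub: "II j \<subseteq> RR j" unfolding II_def by auto

lemma KK_sub: "KK L j \<subseteq> RR j" unfolding KK_def by auto

lemma II_KK: "L \<in> polyring n \<Longrightarrow> II j \<subseteq> KK L j"
  unfolding II_def KK_def using mult by auto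

lemma subspace_KK: "vs.subspace (KK L j)"
  unfolding KK_def
  by (rule vs.subspaceI) (auto intro: add scal zero hompart_add hompart_scal
        simp: distrib_left scal_mult_right)

lemma hdim_mono: "A \<subseteq> B \<Longrightarrow> B \<subseteq> RR j \<Longrightarrow> vs.dim A \<le> vs.dim B"
  using vs.dim_le_fin[of A B "monoms n j"] hompart_span_monoms[of n j] finite_monoms[of n j] by blast

lemma hvec_int: "int (hvec n I j) = int (vs.dim (RR j)) - int (vs.dim (II j))"
proof -
  have "vs.dim (II j) \<le> vs.dim (RR j)" using hdim_mono[OF II_sub order_refl] .
  then show ?thesis unfolding hvec_def kdim_vs II_def by simp
qed

lemma SS_sub: "L \<in> RR 1 \<Longrightarrow> t \<ge> 1 \<Longrightarrow> SS L t \<subseteq> RR t"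
  unfolding SS_def II_def by (auto intro!: hompart_add hompart_mult')

lemma C1:
  assumes L: "L \<in> RR 1" and t: "t \<ge> 1"
  shows "int (vs.dim (RR (t - 1))) + int (vs.dim (II t)) =
         int (vs.dim (KK L (t - 1))) + int (vs.dim (SS L t))"
proof -
  have "vs.dim (RR (t - 1)) + vs.dim (II t) =
     vs.dim {v \<in> RR (t - 1). L * v \<in> II t} +
     vs.dim {L * v + u | v u. v \<in> RR (t - 1) \<and> u \<in> II t}"
    using vs.core[OF subspace_hompart hompart_span_monoms finite_monoms subspace_II II_span
          finite_monoms, of "\<lambda>v. L * v" n "t - 1" t] by (simp add: distrib_left scal_mult_right)
  moreover have "{v \<in> RR (t - 1). L * v \<in> II t} = KK L (t - 1)"
    unfolding KK_def II_def using L t by (auto intro: hompart_mult')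
  ultimately show ?thesis unfolding SS_def by simp
qed

lemma C1':
  assumes L: "L \<in> RR 1" and t: "t \<ge> 1"
  shows "int (hvec n I (t - 1)) - int (hvec n I t) \<le>
           int (vs.dim (KK L (t - 1))) - int (vs.dim (II (t - 1)))"
    and "RR t \<subseteq> SS L t \<Longrightarrow> int (hvec n I (t - 1)) - int (hvec n I t) =
           int (vs.dim (KK L (t - 1))) - int (vs.dim (II (t - 1)))"
proof -
  have "vs.dim (SS L t) \<le> vs.dim (RR t)" using hdim_mono[OF SS_sub[OF L t] order_refl] .
  then show "int (hvec n I (t - 1)) - int (hvec n I t) \<le>
           int (vs.dim (KK L (t - 1))) - int (vs.dim (II (t - 1)))"
    using C1[OF L t] hvec_int[of "t - 1"] hvec_int[of t] by linarith
  assume "RR t \<subseteq> SS L t"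
  then have "SS L t = RR t" using SS_sub[OF L t] by auto
  then have "int (vs.dim (RR (t - 1))) + int (vs.dim (II t)) =
         int (vs.dim (KK L (t - 1))) + int (vs.dim (RR t))" using C1[OF L t] by simp
  then show "int (hvec n I (t - 1)) - int (hvec n I t) =
           int (vs.dim (KK L (t - 1))) - int (vs.dim (II (t - 1)))"
    using C1[OF L t] hvec_int[of "t - 1"] hvec_int[of t] by linarith
qed


lemma L_polyring: "L \<in> RR 1 \<Longrightarrow> L \<in> polyring n" by (rule hompart_polyring)

lemma C2:
  assumes j: "j < n" "c j \<noteq> 0" and L: "L = linform n c"
    and soc: "\<And>a. a \<in> RR (t - 1) \<Longrightarrow> (\<forall>i<n. var i * a \<in> I) \<Longrightarrow> a \<in> I"
    and t: "t \<ge> 1"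
  shows "vs.dim (KK L (t - 1)) \<le> vs.dim (II (t - 1)) + (n - 1) * (vs.dim (KK L t) - vs.dim (II t))"
proof -
  define VS where "VS S = {a \<in> KK L (t - 1). \<forall>i\<in>S. var i * a \<in> I}" for S
  define kk where "kk = vs.dim (KK L t) - vs.dim (II t)"
  have LR: "L \<in> RR 1" using L linform_hompart by simp
  have LP: "L \<in> polyring n" using LR by (rule hompart_polyring)
  have subVS: "vs.subspace (VS S)" for S
  proof (rule vs.subspaceI)
    show "0 \<in> VS S" unfolding VS_def KK_def by (auto intro: zero)
  next
    fix x y assume "x \<in> VS S" "y \<in> VS S"
    then show "x + y \<in> VS S" unfolding VS_def KK_def
      by (auto intro: add hompart_add simp: distrib_left)
  next
    fix c x assume "x \<in> VS S"
    then show "scal c x \<in> VS S" unfolding VS_def KK_def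
      by (auto intro: scal hompart_scal simp: scal_mult_right)
  qed
  have VSsub: "VS S \<subseteq> RR (t - 1)" for S unfolding VS_def KK_def by auto
  have IIKK: "vs.dim (II t) \<le> vs.dim (KK L t)"
    using hdim_mono[OF II_KK[OF LP] KK_sub] .
  have step: "vs.dim (VS S) \<le> vs.dim (VS (insert i S)) + kk" if i: "i < n" for S i
  proof -
    have VI: "var i \<in> RR 1" using var_hompart[OF i] .
    have VP: "(var i :: 'k mpoly) \<in> polyring n" using VI by (rule hompart_polyring)
    have "vs.dim (VS S) + vs.dim (II t) =
       vs.dim {v \<in> VS S. var i * v \<in> II t} +
       vs.dim {var i * v + u | v u. v \<in> VS S \<and> u \<in> II t}"
    proof -
      have sp: "VS S \<subseteq> vs.span (monoms n (t - 1))" using VSsub hompart_span_monoms by blast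
      show ?thesis
        using vs.core[where V="VS S" and F="monoms n (t - 1)" and U="II t" and G="monoms n t"
          and f="\<lambda>v. var i * v", OF subVS sp finite_monoms subspace_II II_span finite_monoms]
        by (simp add: distrib_left scal_mult_right)
    qed
    moreover have "{v \<in> VS S. var i * v \<in> II t} = VS (insert i S)"
    proof -
      have "var i * v \<in> RR t" if "v \<in> VS S" for v
        using hompart_mult'[OF VI subsetD[OF VSsub that]] t by simp
      then show ?thesis unfolding VS_def II_def by auto
    qed
    moreover have "vs.dim {var i * v + u | v u. v \<in> VS S \<and> u \<in> II t} \<le> vs.dim (KK L t)"
    proof (rule hdim_mono[OF _ KK_sub])
      show "{var i * v + u | v u. v \<in> VS S \<and> u \<in> II t} \<subseteq> KK L t"
      proof
        fix x assume "x \<in> {var i * v + u | v u. v \<in> VS S \<and> u \<in> II t}"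
        then obtain v u where x: "x = var i * v + u" "v \<in> VS S" "u \<in> II t" by blast
        have "var i * v \<in> RR t"
          using hompart_mult'[OF VI subsetD[OF VSsub x(2)]] t by simp
        then have "x \<in> RR t" using x II_sub hompart_add by blast
        moreover have "L * v \<in> I" using x(2) unfolding VS_def KK_def by auto
        then have "var i * (L * v) \<in> I" using mult[OF VP] by blast
        then have "L * x \<in> I"
          using x mult[OF LP, of u] add unfolding II_def
          by (simp add: distrib_left mult.left_commute)
        ultimately show "x \<in> KK L t" unfolding KK_def by blast
      qed
    qed
    ultimately have "vs.dim (VS S) + vs.dim (II t) \<le> vs.dim (VS (insert i S)) + vs.dim (KK L t)"
      by simp
    then show ?thesis using IIKK unfolding kk_def by linarith
  qed
  have ind: "vs.dim (KK L (t - 1)) \<le> vs.dim (VS S) + card S * kk" if "finite S" "S \<subseteq> {..<n}" for S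
    using that
  proof (induction S rule: finite_induct)
    case empty
    have "VS {} = KK L (t - 1)" unfolding VS_def by simp
    then show ?case by simp
  next
    case (insert x F)
    then have "vs.dim (KK L (t - 1)) \<le> vs.dim (VS F) + card F * kk" by simp
    moreover have "vs.dim (VS F) \<le> vs.dim (VS (insert x F)) + kk" using step insert by simp
    ultimately show ?case using insert by simp
  qed
  define S0 where "S0 = {..<n} - {j}"
  have cS0: "card S0 = n - 1" unfolding S0_def using j by simp
  have "VS S0 \<subseteq> II (t - 1)"
  proof
    fix a assume a: "a \<in> VS S0"
    then have aR: "a \<in> RR (t - 1)" and La: "L * a \<in> I" and oth: "\<forall>i\<in>S0. var i * a \<in> I"
      unfolding VS_def KK_def by auto
    have "L * a = (\<Sum>i<n. scal (c i) (var i * a))"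
      unfolding L linform_sum by (simp add: sum_distrib_right scal_mult_left)
    also have "\<dots> = scal (c j) (var j * a) + (\<Sum>i\<in>S0. scal (c i) (var i * a))"
      unfolding S0_def using j by (simp add: sum.remove)
    finally have "scal (c j) (var j * a) = L * a - (\<Sum>i\<in>S0. scal (c i) (var i * a))"
      by (simp add: algebra_simps)
    also have "\<dots> \<in> I" using La oth by (intro diff sum scal) auto
    finally have "scal (inverse (c j)) (scal (c j) (var j * a)) \<in> I" by (rule scal)
    then have "var j * a \<in> I" using j by simp
    then have "\<forall>i<n. var i * a \<in> I" using oth S0_def by auto
    then show "a \<in> II (t - 1)" using soc[OF aR] aR unfolding II_def by auto
  qed
  then have "vs.dim (VS S0) \<le> vs.dim (II (t - 1))" using hdim_mono II_sub by blast
  moreover have "vs.dim (KK L (t - 1)) \<le> vs.dim (VS S0) + card S0 * kk"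
    using ind[of S0] S0_def by auto
  ultimately show ?thesis using cS0 unfolding kk_def by simp
qed

lemma grade_decomp:
  assumes L: "L \<in> RR 1" and t: "t \<ge> 1" and p: "p \<in> RR t" "p \<in> ideal_plus_lin n I L"
  shows "p \<in> SS L t"
proof -
  obtain a r where ar: "p = a + r * L" "a \<in> I" "r \<in> polyring n"
    using p(2) unfolding ideal_plus_lin_def by blast
  have "ishom t p" using p(1) hompart_iff by blast
  then have "p = homcomp t p" by (simp add: homcomp_id)
  also have "\<dots> = homcomp t a + homcomp t (r * L)" using ar(1) by (simp add: homcomp_add)
  also have "homcomp t (r * L) = homcomp (t - 1) r * L"
  proof -
    have "ishom 1 L" using L hompart_iff by blast
    from homcomp_mult[OF this, of "t - 1" r] show ?thesis using t by simp
  qed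
  finally have "p = L * homcomp (t - 1) r + homcomp t a" by (simp add: mult.commute)
  moreover have "homcomp t a \<in> II t"
    unfolding II_def using homc[OF ar(2)] homcomp_hompart subsetD[OF sub ar(2)] by blast
  moreover have "homcomp (t - 1) r \<in> RR (t - 1)" using homcomp_hompart[OF ar(3)] .
  ultimately show ?thesis unfolding SS_def by blast
qed

lemma subspace_SS: "vs.subspace (SS L t)"
proof (rule vs.subspaceI)
  show "0 \<in> SS L t" unfolding SS_def II_def
    by (auto intro!: exI[of _ 0] zero)
next
  fix x y assume "x \<in> SS L t" "y \<in> SS L t"
  then obtain v1 u1 v2 u2 where "x = L * v1 + u1" "v1 \<in> RR (t - 1)" "u1 \<in> II t"
      "y = L * v2 + u2" "v2 \<in> RR (t - 1)" "u2 \<in> II t" unfolding SS_def by blast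
  then have "x + y = L * (v1 + v2) + (u1 + u2)" "v1 + v2 \<in> RR (t - 1)" "u1 + u2 \<in> II t"
    unfolding II_def by (auto simp: algebra_simps intro: hompart_add add)
  then show "x + y \<in> SS L t" unfolding SS_def by blast
next
  fix c x assume "x \<in> SS L t"
  then obtain v u where "x = L * v + u" "v \<in> RR (t - 1)" "u \<in> II t" unfolding SS_def by blast
  then have "scal c x = L * scal c v + scal c u" "scal c v \<in> RR (t - 1)" "scal c u \<in> II t"
    unfolding II_def by (auto simp: scal_mult_right vs.scale_right_distrib intro: hompart_scal scal)
  then show "scal c x \<in> SS L t" unfolding SS_def by blast
qed

lemma mono_split:
  assumes m: "m \<in> mons n (Suc t)"
  obtains i m' where "i < n" "m' \<in> mons n t"
    "Poly_Mapping.single m (1::'k) = var i * Poly_Mapping.single m' 1"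
proof -
  have "Poly_Mapping.keys m \<noteq> {}"
  proof
    assume "Poly_Mapping.keys m = {}"
    then have "mdeg m = 0" unfolding mdeg_def by simp
    then show False using m unfolding mons_def by simp
  qed
  then obtain i where i: "i \<in> Poly_Mapping.keys m" by blast
  then have i1: "Poly_Mapping.lookup m i \<ge> 1" by (simp add: in_keys_iff)
  define m' where "m' = m - Poly_Mapping.single i 1"
  have meq: "m = Poly_Mapping.single i 1 + m'"
    by (rule poly_mapping_eqI) (use i1 in \<open>auto simp: m'_def lookup_add lookup_minus lookup_single when_def\<close>)
  have "Poly_Mapping.keys m' \<subseteq> Poly_Mapping.keys m" using meq keys_add_nat by auto
  moreover have "mdeg m' = t" using meq m mdeg_add[of "Poly_Mapping.single i 1" m'] unfolding mons_def by simp
  ultimately have "m' \<in> mons n t" using m unfolding mons_def by auto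
  moreover have "i < n" using i m unfolding mons_def by auto
  moreover have "Poly_Mapping.single m (1::'k) = var i * Poly_Mapping.single m' 1"
    unfolding var_def mult_single meq[symmetric] by simp
  ultimately show ?thesis using that by blast
qed

lemma propagate:
  assumes L: "L \<in> RR 1" and t: "t \<ge> 1" and h: "RR t \<subseteq> SS L t"
  shows "RR (Suc t) \<subseteq> SS L (Suc t)"
proof -
  have "monoms n (Suc t) \<subseteq> SS L (Suc t)"
  proof
    fix x assume "x \<in> (monoms n (Suc t) :: 'k mpoly set)"
    then obtain m where m: "m \<in> mons n (Suc t)" "x = Poly_Mapping.single m 1" unfolding monoms_def by blast
    obtain i m' where im: "i < n" "m' \<in> mons n t" "Poly_Mapping.single m (1::'k) = var i * Poly_Mapping.single m' 1"
      using mono_split[OF m(1)] by blast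
    have "Poly_Mapping.single m' (1::'k) \<in> RR t" by (rule mono_in_hompart[OF im(2)])
    then obtain v u where vu: "Poly_Mapping.single m' 1 = L * v + u" "v \<in> RR (t - 1)" "u \<in> II t"
      using h unfolding SS_def by blast
    have VI: "var i \<in> RR 1" using var_hompart[OF im(1)] .
    have "x = L * (var i * v) + var i * u" using m(2) im(3) vu(1) by (simp add: algebra_simps)
    moreover have "var i * v \<in> RR (Suc t - 1)" using hompart_mult'[OF VI vu(2)] t by simp
    moreover have "var i * u \<in> II (Suc t)"
      using vu(3) hompart_mult'[OF VI, of u t "Suc t"] mult[OF hompart_polyring[OF VI]] unfolding II_def by auto
    ultimately show "x \<in> SS L (Suc t)" unfolding SS_def by blast
  qed
  then have "vs.span (monoms n (Suc t)) \<subseteq> SS L (Suc t)" using vs.span_minimal subspace_SS by blast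
  then show ?thesis using hompart_span_monoms by blast
qed

lemma propagate_all:
  assumes L: "L \<in> RR 1" and base: "RR (r + 1) \<subseteq> ideal_plus_lin n I L" and t: "t \<ge> r + 1"
  shows "RR t \<subseteq> SS L t"
  using t
proof (induction t rule: dec_induct)
  case base
  then show ?case using grade_decomp[OF L] assms(2) by auto
next
  case (step t)
  then show ?case using propagate[OF L] by simp
qed
end

definition mon :: "(nat \<Rightarrow> 'k::field) \<Rightarrow> (nat \<Rightarrow>\<^sub>0 nat) \<Rightarrow> 'k" where
  "mon c m = (\<Prod>i\<in>Poly_Mapping.keys m. c i ^ Poly_Mapping.lookup m i)"

lemma meval_mon: "meval f c = (\<Sum>m\<in>Poly_Mapping.keys f. Poly_Mapping.lookup f m * mon c m)"
  unfolding meval_def mon_def ..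

lemma mon_sup: "finite S \<Longrightarrow> Poly_Mapping.keys m \<subseteq> S \<Longrightarrow> mon c m = (\<Prod>i\<in>S. c i ^ Poly_Mapping.lookup m i)"
  unfolding mon_def by (rule prod.mono_neutral_left) (auto simp: in_keys_iff)

lemma mon_add: "mon c (a + b) = mon c a * mon c b"
proof -
  let ?S = "Poly_Mapping.keys a \<union> Poly_Mapping.keys b"
  have "mon c (a + b) = (\<Prod>i\<in>?S. c i ^ Poly_Mapping.lookup (a + b) i)"
    by (rule mon_sup) (auto simp: keys_add_nat)
  also have "\<dots> = (\<Prod>i\<in>?S. c i ^ Poly_Mapping.lookup a i) * (\<Prod>i\<in>?S. c i ^ Poly_Mapping.lookup b i)"
    by (simp add: lookup_add power_add prod.distrib)
  also have "\<dots> = mon c a * mon c b" using mon_sup[of ?S a c] mon_sup[of ?S b c] by simp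
  finally show ?thesis .
qed

lemma mon_zero[simp]: "mon c 0 = 1" unfolding mon_def by simp

lemma meval_sup: "finite S \<Longrightarrow> Poly_Mapping.keys f \<subseteq> S \<Longrightarrow>
   meval f c = (\<Sum>m\<in>S. Poly_Mapping.lookup f m * mon c m)"
  unfolding meval_mon by (rule sum.mono_neutral_left) (auto simp: in_keys_iff)

lemma meval_add: "meval (f + g) c = meval f c + meval g c"
proof -
  let ?S = "Poly_Mapping.keys f \<union> Poly_Mapping.keys g"
  have "meval (f + g) c = (\<Sum>m\<in>?S. Poly_Mapping.lookup (f + g) m * mon c m)"
    by (rule meval_sup) (use keys_add[of f g] in auto)
  also have "\<dots> = (\<Sum>m\<in>?S. Poly_Mapping.lookup f m * mon c m) + (\<Sum>m\<in>?S. Poly_Mapping.lookup g m * mon c m)"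
    by (simp add: lookup_add distrib_right sum.distrib)
  also have "\<dots> = meval f c + meval g c" using meval_sup[of ?S f c] meval_sup[of ?S g c] by simp
  finally show ?thesis .
qed

lemma meval_zero[simp]: "meval 0 c = 0" unfolding meval_def by simp

lemma meval_single: "meval (Poly_Mapping.single m a) c = a * mon c m"
  unfolding meval_mon by simp

lemma meval_sumf: "meval (sum f A) c = (\<Sum>x\<in>A. meval (f x) c)"
  by (induction A rule: infinite_finite_induct) (auto simp: meval_add)

lemma meval_mult: "meval (p * q) c = meval p c * meval q c"
proof -
  have "p * q = (\<Sum>m\<in>Poly_Mapping.keys p. \<Sum>m'\<in>Poly_Mapping.keys q.
      Poly_Mapping.single m (Poly_Mapping.lookup p m) * Poly_Mapping.single m' (Poly_Mapping.lookup q m'))"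
    by (subst poly_sum_single[of p, symmetric], subst poly_sum_single[of q, symmetric])
       (rule sum_product)
  then have "meval (p * q) c = (\<Sum>m\<in>Poly_Mapping.keys p. \<Sum>m'\<in>Poly_Mapping.keys q.
      (Poly_Mapping.lookup p m * mon c m) * (Poly_Mapping.lookup q m' * mon c m'))"
    by (simp add: meval_sumf mult_single meval_single mon_add algebra_simps)
  also have "\<dots> = meval p c * meval q c"
    unfolding meval_mon by (simp only: sum_product)
  finally show ?thesis .
qed

lemma meval_one[simp]: "meval 1 c = 1"
  using meval_single[of 0 1 c] by simp

interpretation mh: comm_ring_hom "\<lambda>p. meval p c"
  by unfold_locales (simp_all add: meval_add meval_mult)

lemma meval_scal: "meval (scal a p) c = a * meval p c"
  by (simp add: scal_conv meval_mult meval_single)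

section \<open>Non-vanishing\<close>

lemma digits_bound:
  assumes "\<forall>i<n. a i < (D::nat)"
  shows "(\<Sum>i<n. a i * D ^ i) < D ^ n"
  using assms
proof (induction n)
  case 0 then show ?case by simp
next
  case (Suc n)
  have h1: "(\<Sum>i<n. a i * D ^ i) < D ^ n" using Suc by simp
  have an: "a n < D" using Suc.prems by simp
  then have "a n \<le> D - 1" by linarith
  then have h2: "a n * D ^ n \<le> (D - 1) * D ^ n" by (rule mult_right_mono) simp
  have h3: "D ^ n + (D - 1) * D ^ n = D ^ Suc n" using an
    by (cases D) (auto simp: algebra_simps)
  have h4: "(\<Sum>i<Suc n. a i * D ^ i) = (\<Sum>i<n. a i * D ^ i) + a n * D ^ n" by simp
  show ?case unfolding h4 using h1 h2 h3 by linarith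
qed

lemma digits_inj:
  assumes "\<forall>i<n. a i < (D::nat)" "\<forall>i<n. b i < D"
    and "(\<Sum>i<n. a i * D ^ i) = (\<Sum>i<n. b i * D ^ i)"
  shows "\<forall>i<n. a i = b i"
  using assms
proof (induction n)
  case 0 then show ?case by simp
next
  case (Suc n)
  define A where "A = (\<Sum>i<n. a i * D ^ i)"
  define B where "B = (\<Sum>i<n. b i * D ^ i)"
  have pa: "\<forall>i<n. a i < D" and pb: "\<forall>i<n. b i < D" using Suc.prems by auto
  have A: "A < D ^ n" unfolding A_def by (rule digits_bound[OF pa])
  have B: "B < D ^ n" unfolding B_def by (rule digits_bound[OF pb])
  have eq: "a n * D ^ n + A = b n * D ^ n + B" using Suc.prems(3) unfolding A_def B_def
    by (simp add: add.commute)
  have "a n < D" using Suc.prems by simp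
  then have Dn: "D ^ n \<noteq> 0" by simp
  have d1: "(a n * D ^ n + A) div D ^ n = a n" using A Dn div_mult_self3[OF Dn, of "a n" A] by simp
  have d2: "(b n * D ^ n + B) div D ^ n = b n" using B Dn div_mult_self3[OF Dn, of "b n" B] by simp
  have an: "a n = b n" using d1 d2 eq by simp
  then have "A = B" using eq by simp
  then have "\<forall>i<n. a i = b i" using Suc.IH[OF pa pb] unfolding A_def B_def by blast
  then show ?case using an less_Suc_eq by auto
qed

lemma kron_poly:
  fixes f :: "'k::field mpoly"
  assumes f: "f \<in> polyring n" "f \<noteq> 0" and D: "\<And>m i. m \<in> Poly_Mapping.keys f \<Longrightarrow> Poly_Mapping.lookup m i < D"
  defines "e \<equiv> \<lambda>m. (\<Sum>i<n. Poly_Mapping.lookup m i * D ^ i)"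
  defines "Q \<equiv> (\<Sum>m\<in>Poly_Mapping.keys f. monom (Poly_Mapping.lookup f m) (e m))"
  shows "Q \<noteq> 0" and "\<And>t. meval f (\<lambda>i. t ^ (D ^ i)) = poly Q t"
proof -
  have inj: "inj_on e (Poly_Mapping.keys f)"
  proof (rule inj_onI)
    fix x y assume xy: "x \<in> Poly_Mapping.keys f" "y \<in> Poly_Mapping.keys f" "e x = e y"
    have dx: "\<forall>i<n. Poly_Mapping.lookup x i < D" using D[OF xy(1)] by blast
    have dy: "\<forall>i<n. Poly_Mapping.lookup y i < D" using D[OF xy(2)] by blast
    have "\<forall>i<n. Poly_Mapping.lookup x i = Poly_Mapping.lookup y i"
      by (rule digits_inj[OF dx dy]) (use xy(3) in \<open>simp add: e_def\<close>)
    moreover have "Poly_Mapping.keys x \<subseteq> {..<n}" "Poly_Mapping.keys y \<subseteq> {..<n}"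
      using xy f(1) unfolding polyring_def by auto
    ultimately show "x = y"
    proof (intro poly_mapping_eqI)
      fix k
      assume h: "\<forall>i<n. Poly_Mapping.lookup x i = Poly_Mapping.lookup y i"
        "Poly_Mapping.keys x \<subseteq> {..<n}" "Poly_Mapping.keys y \<subseteq> {..<n}"
      show "Poly_Mapping.lookup x k = Poly_Mapping.lookup y k"
      proof (cases "k < n")
        case True then show ?thesis using h(1) by blast
      next
        case False
        then have "k \<notin> Poly_Mapping.keys x" "k \<notin> Poly_Mapping.keys y" using h(2,3) by auto
        then show ?thesis by (simp add: in_keys_iff)
      qed
    qed
  qed
  have "Poly_Mapping.keys f \<noteq> {}"
  proof
    assume "Poly_Mapping.keys f = {}"
    then have "f = 0" by (intro poly_mapping_eqI) (simp add: in_keys_iff[symmetric])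
    then show False using f(2) by simp
  qed
  then obtain m0 where m0: "m0 \<in> Poly_Mapping.keys f" by blast
  have "coeff Q (e m0) = (\<Sum>m\<in>Poly_Mapping.keys f. if e m = e m0 then Poly_Mapping.lookup f m else 0)"
    unfolding Q_def coeff_sum by (simp add: coeff_monom)
  also have "\<dots> = (\<Sum>m\<in>Poly_Mapping.keys f. if m = m0 then Poly_Mapping.lookup f m else 0)"
  proof (intro sum.cong refl)
    fix m assume m: "m \<in> Poly_Mapping.keys f"
    have "e m = e m0 \<longleftrightarrow> m = m0" using inj_onD[OF inj _ m m0] by auto
    then show "(if e m = e m0 then Poly_Mapping.lookup f m else 0) =
       (if m = m0 then Poly_Mapping.lookup f m else 0)" by simp
  qed
  also have "\<dots> = Poly_Mapping.lookup f m0" using m0 by simp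
  finally show "Q \<noteq> 0" using m0 by (auto simp: in_keys_iff)
  fix t :: 'k
  have "mon (\<lambda>i. t ^ (D ^ i)) m = t ^ e m" if "m \<in> Poly_Mapping.keys f" for m
  proof -
    have "Poly_Mapping.keys m \<subseteq> {..<n}" using that f(1) unfolding polyring_def by auto
    then have "mon (\<lambda>i. t ^ (D ^ i)) m = (\<Prod>i<n. (t ^ (D ^ i)) ^ Poly_Mapping.lookup m i)"
      by (rule mon_sup[OF finite_lessThan])
    also have "\<dots> = t ^ e m" unfolding e_def power_sum
      by (intro prod.cong refl) (simp add: power_mult[symmetric] mult.commute)
    finally show ?thesis .
  qed
  then show "meval f (\<lambda>i. t ^ (D ^ i)) = poly Q t"
    unfolding meval_mon Q_def poly_sum poly_monom by simp
qed

lemma nonvanish: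
  fixes f g :: "'k::field_char_0 mpoly"
  assumes "f \<in> polyring n" "f \<noteq> 0" "g \<in> polyring n" "g \<noteq> 0"
  shows "\<exists>c. meval f c \<noteq> 0 \<and> meval g c \<noteq> 0 \<and> (\<forall>i. c i \<noteq> 0)"
proof -
  define D where "D = Suc (\<Sum>m\<in>Poly_Mapping.keys f \<union> Poly_Mapping.keys g. mdeg m)"
  have D: "Poly_Mapping.lookup m i < D" if "m \<in> Poly_Mapping.keys f \<union> Poly_Mapping.keys g" for m i
  proof -
    have "Poly_Mapping.lookup m i \<le> mdeg m" by (rule lookup_le_mdeg)
    also have "\<dots> \<le> (\<Sum>m\<in>Poly_Mapping.keys f \<union> Poly_Mapping.keys g. mdeg m)"
      by (rule member_le_sum) (use that in auto)
    finally show ?thesis unfolding D_def by simp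
  qed
  obtain Qf where Qf: "Qf \<noteq> 0" "\<And>t. meval f (\<lambda>i. t ^ (D ^ i)) = poly Qf t"
    using kron_poly[OF assms(1,2), of D] D by auto
  obtain Qg where Qg: "Qg \<noteq> 0" "\<And>t. meval g (\<lambda>i. t ^ (D ^ i)) = poly Qg t"
    using kron_poly[OF assms(3,4), of D] D by auto
  let ?P = "Qf * Qg * [:0, 1:]"
  have "?P \<noteq> 0" using Qf Qg by simp
  then have "finite {t. poly ?P t = 0}" by (rule poly_roots_finite)
  then obtain t :: 'k where "poly ?P t \<noteq> 0"
    using infinite_UNIV_char_0 by (metis (mono_tags, lifting) UNIV_eq_I mem_Collect_eq)
  then have "poly Qf t \<noteq> 0" "poly Qg t \<noteq> 0" "t \<noteq> 0" by auto
  then show ?thesis using Qf Qg by (intro exI[of _ "\<lambda>i. t ^ (D ^ i)"]) auto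
qed

lemma meval_var: "meval (var v) c = c v"
  unfolding var_def meval_single mon_def by simp

lemma var_polyring: "v < n \<Longrightarrow> var v \<in> polyring n"
  using var_hompart hompart_polyring by blast

lemma meval_linform_mult:
  "Poly_Mapping.lookup (linform n c * q) m = (\<Sum>v<n. c v * Poly_Mapping.lookup (var v * q) m)"
  unfolding linform_sum by (simp add: sum_distrib_right scal_mult_left lookup_sum)

lemma signof_polyring: "(signof p :: 'k::field mpoly) \<in> polyring n"
proof -
  have "sign p = 1 \<or> sign p = -1" by (simp add: sign_def)
  moreover have "(- 1 :: 'k mpoly) \<in> polyring n" using polyring_uminus[OF polyring_one[of n]] .
  ultimately show ?thesis by auto
qed

lemma det_polyring:
  assumes "A \<in> carrier_mat N N" "\<And>i j. i < N \<Longrightarrow> j < N \<Longrightarrow> A $$ (i, j) \<in> polyring n"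
  shows "det (A :: 'k::field mpoly mat) \<in> polyring n"
  unfolding det_def'[OF assms(1)]
proof (intro polyring_sum polyring_mult signof_polyring polyring_prod)
  fix p i assume "p \<in> {p. p permutes {0..<N}}" "i \<in> {0..<N}"
  then show "A $$ (i, p i) \<in> polyring n" using assms(2) permutes_in_image by fastforce
qed

context hideal
begin

lemma ipl_zero: "0 \<in> ideal_plus_lin n I L"
  unfolding ideal_plus_lin_def using zero by (auto intro!: exI[of _ 0])

lemma ipl_add: "x \<in> ideal_plus_lin n I L \<Longrightarrow> y \<in> ideal_plus_lin n I L \<Longrightarrow> x + y \<in> ideal_plus_lin n I L"
proof -
  assume "x \<in> ideal_plus_lin n I L" "y \<in> ideal_plus_lin n I L"
  then obtain a1 r1 a2 r2 where h: "x = a1 + r1 * L" "a1 \<in> I" "r1 \<in> polyring n"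
    "y = a2 + r2 * L" "a2 \<in> I" "r2 \<in> polyring n" unfolding ideal_plus_lin_def by blast
  then have "x + y = (a1 + a2) + (r1 + r2) * L" by (simp add: algebra_simps)
  then show ?thesis unfolding ideal_plus_lin_def using h add polyring_add by blast
qed

lemma ipl_scal: "x \<in> ideal_plus_lin n I L \<Longrightarrow> scal c x \<in> ideal_plus_lin n I L"
proof -
  assume "x \<in> ideal_plus_lin n I L"
  then obtain a r where h: "x = a + r * L" "a \<in> I" "r \<in> polyring n" unfolding ideal_plus_lin_def by blast
  then have "scal c x = scal c a + scal c r * L" by (simp add: scal_mult_left vs.scale_right_distrib)
  then show ?thesis unfolding ideal_plus_lin_def using h scal polyring_scal by blast
qed

lemma ipl_sum: "(\<And>x. x \<in> A \<Longrightarrow> f x \<in> ideal_plus_lin n I L) \<Longrightarrow> sum f A \<in> ideal_plus_lin n I L"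
  by (induction A rule: infinite_finite_induct) (auto intro: ipl_add ipl_zero)

lemma I_ipl: "a \<in> I \<Longrightarrow> a \<in> ideal_plus_lin n I L"
proof -
  assume a: "a \<in> I"
  have "a = a + 0 * L" by simp
  then show ?thesis unfolding ideal_plus_lin_def using a polyring_0 by blast
qed

lemma monoms_ipl:
  assumes "\<And>m. m \<in> mons n j \<Longrightarrow> Poly_Mapping.single m 1 \<in> ideal_plus_lin n I L"
  shows "RR j \<subseteq> ideal_plus_lin n I L"
proof
  fix p assume p: "p \<in> RR j"
  have "p = (\<Sum>m\<in>Poly_Mapping.keys p. scal (Poly_Mapping.lookup p m) (Poly_Mapping.single m 1))"
    by (subst poly_sum_single[of p, symmetric]) (simp add: single_scal[symmetric])
  also have "\<dots> \<in> ideal_plus_lin n I L"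
  proof (intro ipl_sum ipl_scal assms)
    fix m assume "m \<in> Poly_Mapping.keys p"
    then show "m \<in> mons n j" using p unfolding hompart_def polyring_def mons_def by auto
  qed
  finally show "p \<in> ideal_plus_lin n I L" .
qed


lemma one_RR0: "(1 :: 'k mpoly) \<in> RR 0"
proof -
  have "(0 :: nat \<Rightarrow>\<^sub>0 nat) \<in> mons n 0" unfolding mons_def by simp
  from mono_in_hompart[OF this, of "1::'k"] show ?thesis by simp
qed

lemma red_exists:
  assumes "\<exists>N. RR N \<subseteq> I" "1 \<notin> I"
  shows "\<exists>l. RR (l + 1) \<subseteq> ideal_plus_lin n I L"
proof -
  obtain N where N: "RR N \<subseteq> I" using assms(1) by blast
  have "N \<noteq> 0"
  proof
    assume "N = 0"
    with N have "RR 0 \<subseteq> I" by simp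
    with one_RR0 assms(2) show False by blast
  qed
  then have "RR ((N - 1) + 1) \<subseteq> ideal_plus_lin n I L" using N I_ipl by auto
  then show ?thesis by blast
qed

lemma open_cond:
  assumes ex: "\<And>c. \<exists>l. RR (l + 1) \<subseteq> ideal_plus_lin n I (linform n c)"
    and r0: "red_num_wrt n I (linform n c0) = r0"
  shows "\<exists>Dp. Dp \<in> polyring n \<and> meval Dp c0 \<noteq> 0 \<and>
     (\<forall>c. meval Dp c \<noteq> 0 \<longrightarrow> red_num_wrt n I (linform n c) \<le> r0)"
proof -
  define L0 where "L0 = linform n c0"
  have L0: "L0 \<in> RR 1" unfolding L0_def by (rule linform_hompart)
  have base: "RR (r0 + 1) \<subseteq> ideal_plus_lin n I L0"
    using LeastI_ex[OF ex[of c0]] r0 unfolding red_num_wrt_def L0_def by simp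
  define M where "M = mons n (r0 + 1)"
  define N where "N = card M"
  obtain h where h: "bij_betw h {0..<N} M"
    using ex_bij_betw_nat_finite[OF finite_mons] unfolding N_def M_def by blast
  have hM: "h k \<in> M" if "k < N" for k using h that bij_betwE by fastforce
  have hinj: "h i = h k \<longleftrightarrow> i = k" if "i < N" "k < N" for i k
    using h that unfolding bij_betw_def inj_on_def by auto
  have "\<forall>k. \<exists>vu. k < N \<longrightarrow> (Poly_Mapping.single (h k) 1 = L0 * fst vu + snd vu \<and>
          fst vu \<in> RR r0 \<and> snd vu \<in> II (r0 + 1))"
  proof (intro allI impI)
    fix k
    show "\<exists>vu. k < N \<longrightarrow> (Poly_Mapping.single (h k) 1 = L0 * fst vu + snd vu \<and>
          fst vu \<in> RR r0 \<and> snd vu \<in> II (r0 + 1))"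
    proof (cases "k < N")
      case True
      have "Poly_Mapping.single (h k) (1::'k) \<in> RR (r0 + 1)"
        using mono_in_hompart hM[OF True] unfolding M_def by blast
      then have "Poly_Mapping.single (h k) 1 \<in> SS L0 (r0 + 1)"
        using grade_decomp[OF L0] base by auto
      then obtain v u where "Poly_Mapping.single (h k) 1 = L0 * v + u" "v \<in> RR r0" "u \<in> II (r0 + 1)"
        unfolding SS_def by auto
      then show ?thesis by (intro exI[of _ "(v, u)"]) auto
    qed auto
  qed
  then obtain F where F: "\<And>k. k < N \<Longrightarrow> Poly_Mapping.single (h k) 1 = L0 * fst (F k) + snd (F k) \<and>
          fst (F k) \<in> RR r0 \<and> snd (F k) \<in> II (r0 + 1)"
    by metis
  define qv where "qv k = fst (F k)" for k
  define ua where "ua k = snd (F k)" for k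
  have QU: "Poly_Mapping.single (h k) 1 = L0 * qv k + ua k" "qv k \<in> RR r0" "ua k \<in> II (r0 + 1)"
    if "k < N" for k using F[OF that] unfolding qv_def ua_def by auto
  define G where "G c k = ua k + linform n c * qv k" for c k
  have G_hom: "G c k \<in> RR (r0 + 1)" if "k < N" for c k
  proof -
    have "linform n c * qv k \<in> RR (r0 + 1)"
      using hompart_mult'[OF linform_hompart QU(2)[OF that]] by simp
    then show ?thesis unfolding G_def using QU(3)[OF that] II_sub hompart_add by blast
  qed
  have G_ipl: "G c k \<in> ideal_plus_lin n I (linform n c)" if "k < N" for c k
  proof -
    have "G c k = ua k + qv k * linform n c" unfolding G_def by (simp add: mult.commute)
    moreover have "ua k \<in> I" using QU(3)[OF that] unfolding II_def by auto
    moreover have "qv k \<in> polyring n" using QU(2)[OF that] hompart_polyring by blast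
    ultimately show ?thesis unfolding ideal_plus_lin_def by blast
  qed
  have G0: "G c0 k = Poly_Mapping.single (h k) 1" if "k < N" for k
    using QU(1)[OF that] unfolding G_def L0_def by (simp add: add.commute)
  define Ent where "Ent i k = Poly_Mapping.single 0 (Poly_Mapping.lookup (ua k) (h i)) +
     (\<Sum>v<n. Poly_Mapping.single 0 (Poly_Mapping.lookup (var v * qv k) (h i)) * var v)" for i k
  have Ent_poly: "Ent i k \<in> polyring n" for i k
    unfolding Ent_def
    by (intro polyring_add polyring_sum polyring_mult polyring_const var_polyring) auto
  have Ent_eval: "meval (Ent i k) c = Poly_Mapping.lookup (G c k) (h i)" for i k c
  proof -
    have "meval (Ent i k) c = Poly_Mapping.lookup (ua k) (h i) +
        (\<Sum>v<n. Poly_Mapping.lookup (var v * qv k) (h i) * c v)"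
      unfolding Ent_def by (simp add: meval_add meval_sumf meval_mult meval_single meval_var)
    also have "\<dots> = Poly_Mapping.lookup (ua k) (h i) +
        (\<Sum>v<n. c v * Poly_Mapping.lookup (var v * qv k) (h i))"
      by (simp add: mult.commute)
    also have "\<dots> = Poly_Mapping.lookup (G c k) (h i)"
      unfolding G_def lookup_add meval_linform_mult ..
    finally show ?thesis .
  qed
  define P where "P = mat N N (\<lambda>(i, k). Ent i k)"
  define Mc where "Mc c = mat N N (\<lambda>(i, k). Poly_Mapping.lookup (G c k) (h i))" for c
  define Dp where "Dp = det P"
  have Pc: "P \<in> carrier_mat N N" unfolding P_def by simp
  have Dp_poly: "Dp \<in> polyring n" unfolding Dp_def
    by (rule det_polyring[OF Pc]) (simp add: P_def Ent_poly)
  have Dp_eval: "meval Dp c = det (Mc c)" for c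
  proof -
    have "map_mat (\<lambda>p. meval p c) P = Mc c"
      by (rule eq_matI) (auto simp: P_def Mc_def Ent_eval)
    then show ?thesis unfolding Dp_def using mh.hom_det[of c P] by simp
  qed
  have "Mc c0 = 1\<^sub>m N"
    by (rule eq_matI) (auto simp: Mc_def G0 lookup_single when_def hinj)
  then have "meval Dp c0 = 1" using Dp_eval by simp
  moreover have "red_num_wrt n I (linform n c) \<le> r0" if nz: "meval Dp c \<noteq> 0" for c
  proof -
    have McC: "Mc c \<in> carrier_mat N N" unfolding Mc_def by simp
    have "det (Mc c) \<noteq> 0" using nz Dp_eval by simp
    from det_non_zero_imp_unit[OF McC this, of "()"]
    obtain B where B: "B \<in> carrier_mat N N" "Mc c * B = 1\<^sub>m N"
      unfolding Units_def ring_mat_def by auto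
    have w: "Poly_Mapping.single (h j) 1 \<in> ideal_plus_lin n I (linform n c)" if j: "j < N" for j
    proof -
      define w where "w = (\<Sum>k\<in>{0..<N}. scal (B $$ (k, j)) (G c k))"
      have "w \<in> ideal_plus_lin n I (linform n c)"
        unfolding w_def by (intro ipl_sum ipl_scal G_ipl) auto
      moreover have "w = Poly_Mapping.single (h j) 1"
      proof (rule poly_mapping_eqI)
        fix m
        have lw: "Poly_Mapping.lookup w m = (\<Sum>k\<in>{0..<N}. B $$ (k, j) * Poly_Mapping.lookup (G c k) m)"
          unfolding w_def by (simp add: lookup_sum)
        show "Poly_Mapping.lookup w m = Poly_Mapping.lookup (Poly_Mapping.single (h j) 1) m"
        proof (cases "m \<in> M")
          case True
          then obtain i where i: "i < N" "m = h i" using h unfolding bij_betw_def by auto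
          have "Poly_Mapping.lookup w m = (\<Sum>k\<in>{0..<N}. Mc c $$ (i, k) * B $$ (k, j))"
            unfolding lw by (intro sum.cong refl) (auto simp: Mc_def i)
          also have "\<dots> = (Mc c * B) $$ (i, j)"
            using B(1) i(1) j by (simp add: Mc_def scalar_prod_def)
          also have "\<dots> = (if i = j then 1 else 0)" using B(2) i j by simp
          also have "\<dots> = Poly_Mapping.lookup (Poly_Mapping.single (h j) 1) m"
            using i j hinj by (auto simp: lookup_single when_def)
          finally show ?thesis .
        next
          case False
          have "Poly_Mapping.lookup (G c k) m = 0" if "k \<in> {0..<N}" for k
          proof -
            have "G c k \<in> RR (r0 + 1)" using G_hom that by simp
            then have "m \<notin> Poly_Mapping.keys (G c k)"
              using False unfolding hompart_def polyring_def M_def mons_def by auto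
            then show ?thesis by (simp add: in_keys_iff)
          qed
          then have "Poly_Mapping.lookup w m = 0" unfolding lw by simp
          moreover have "h j \<noteq> m" using hM[OF j] False by auto
          ultimately show ?thesis by (simp add: lookup_single when_def)
        qed
      qed
      ultimately show ?thesis by simp
    qed
    have "RR (r0 + 1) \<subseteq> ideal_plus_lin n I (linform n c)"
    proof (rule monoms_ipl)
      fix m assume "m \<in> mons n (r0 + 1)"
      then have "m \<in> h ` {0..<N}" using h unfolding bij_betw_def M_def by simp
      then obtain j where "j < N" "m = h j" by auto
      then show "Poly_Mapping.single m 1 \<in> ideal_plus_lin n I (linform n c)" using w by simp
    qed
    then show ?thesis unfolding red_num_wrt_def by (rule Least_le)
  qed
  ultimately show ?thesis using Dp_poly by (intro exI[of _ Dp]) auto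
qed
end

lemma r1_char:
  fixes I :: "'k::field_char_0 mpoly set"
  assumes art: "graded_artinian n I"
  shows "\<exists>c. red_num_wrt n I (linform n c) = r1 n I \<and> (\<forall>i. c i \<noteq> 0)"
proof -
  interpret hideal n I using art by (simp add: graded_artinian_def hideal_def)
  have ex: "\<exists>l. RR (l + 1) \<subseteq> ideal_plus_lin n I (linform n c)" for c
    by (rule red_exists) (use art in \<open>auto simp: graded_artinian_def\<close>)
  define red where "red c = red_num_wrt n I (linform n c)" for c
  define r0 where "r0 = (LEAST r. \<exists>c. red c = r)"
  have "\<exists>c. red c = r0" unfolding r0_def by (rule LeastI_ex) auto
  then obtain c0 where c0: "red c0 = r0" by blast
  have min: "r0 \<le> red c" for c unfolding r0_def by (rule Least_le) auto
  obtain Dp where Dp: "Dp \<in> polyring n" "meval Dp c0 \<noteq> 0"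
    "\<And>c. meval Dp c \<noteq> 0 \<Longrightarrow> red c \<le> r0"
    using open_cond[OF ex c0[unfolded red_def]] unfolding red_def by blast
  have Dp0: "Dp \<noteq> 0" using Dp(2) by auto
  have gen: "red c = r0" if "meval Dp c \<noteq> 0" for c using Dp(3)[OF that] min[of c] by simp
  have "r1 n I = r0"
    unfolding r1_def
  proof (rule the_equality)
    show "\<exists>f::'k mpoly. f \<in> polyring n \<and> f \<noteq> 0 \<and>
        (\<forall>c. meval f c \<noteq> 0 \<longrightarrow> red_num_wrt n I (linform n c) = r0)"
      using Dp(1) Dp0 gen unfolding red_def by blast
  next
    fix r assume "\<exists>f::'k mpoly. f \<in> polyring n \<and> f \<noteq> 0 \<and>
        (\<forall>c. meval f c \<noteq> 0 \<longrightarrow> red_num_wrt n I (linform n c) = r)"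
    then obtain g :: "'k mpoly" where g: "g \<in> polyring n" "g \<noteq> 0"
      "\<And>c. meval g c \<noteq> 0 \<Longrightarrow> red c = r" unfolding red_def by blast
    obtain c where "meval Dp c \<noteq> 0" "meval g c \<noteq> 0"
      using nonvanish[OF Dp(1) Dp0 g(1,2)] by blast
    then show "r = r0" using g(3) gen by metis
  qed
  obtain c where "meval Dp c \<noteq> 0" "\<forall>i. c i \<noteq> 0"
    using nonvanish[OF Dp(1) Dp0 Dp(1) Dp0] by blast
  then show ?thesis using gen \<open>r1 n I = r0\<close> unfolding red_def by auto
qed

lemma hompart0_zero: "j \<ge> 1 \<Longrightarrow> hompart 0 j \<subseteq> {0 :: 'k::field mpoly}"
proof
  fix p :: "'k mpoly" assume j: "j \<ge> 1" and p: "p \<in> hompart 0 j"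
  have "Poly_Mapping.keys p = {}"
  proof (rule ccontr)
    assume "Poly_Mapping.keys p \<noteq> {}"
    then obtain m where m: "m \<in> Poly_Mapping.keys p" by blast
    then have "Poly_Mapping.keys m = {}" "mdeg m = j" using p unfolding hompart_def polyring_def by auto
    then show False using j unfolding mdeg_def by simp
  qed
  then have "p = 0" by (intro poly_mapping_eqI) (simp add: in_keys_iff[symmetric])
  then show "p \<in> {0}" by simp
qed

theorem proposition3p4:
  fixes n :: nat and I :: "'k::field_char_0 mpoly set" and s d :: nat
  assumes art: "graded_artinian n I"
    and lev: "level n I"
    and socdeg: "hvec n I s > 0" "\<forall>j>s. hvec n I j = 0"
    and dr: "d \<ge> r1 n I"
    and drop: "hvec n I (d - 1) > hvec n I d"
  shows "((\<forall>t. d \<le> t \<and> t \<le> s \<longrightarrow> hvec n I (t - 1) > hvec n I t) \<and> hvec n I s > 0) \<and>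
         (\<forall>t. d \<le> t \<and> t \<le> s \<longrightarrow>
           int (hvec n I (t - 1)) - int (hvec n I t)
             \<le> (int n - 1) * (int (hvec n I t) - int (hvec n I (t + 1))))"
proof -
  interpret hideal n I using art by (simp add: graded_artinian_def hideal_def)
  have d1: "d \<ge> 1" using drop by (cases d) auto
  show ?thesis
  proof (cases "n = 0")
    case True
    have "hvec n I j = 0" if "j \<ge> 1" for j
    proof -
      have "vs.dim (RR j) \<le> card ({} :: 'k mpoly set)"
        using hompart0_zero[OF that] True by (intro vs.dim_le_card) (auto simp: vs.span_zero)
      then show ?thesis unfolding hvec_def kdim_vs by simp
    qed
    then have "s = 0" using socdeg(1) by (cases s) auto
    then show ?thesis using d1 socdeg(1) by auto
  next
    case False
    then have n1: "n \<ge> 1" by simp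
    obtain c where c: "red_num_wrt n I (linform n c) = r1 n I" "\<forall>i. c i \<noteq> 0"
      using r1_char[OF art] by blast
    define L where "L = linform n c"
    define r where "r = r1 n I"
    have L: "L \<in> RR 1" unfolding L_def by (rule linform_hompart)
    have LP: "L \<in> polyring n" using L hompart_polyring by blast
    have ex: "\<exists>l. RR (l + 1) \<subseteq> ideal_plus_lin n I L"
      by (rule red_exists) (use art in \<open>auto simp: graded_artinian_def\<close>)
    have base: "RR (r + 1) \<subseteq> ideal_plus_lin n I L"
      using LeastI_ex[OF ex] c(1) unfolding red_num_wrt_def L_def r_def by simp
    have propa: "RR t \<subseteq> SS L t" if "t \<ge> r + 1" for t
      using propagate_all[OF L base that] .
    define k where "k j = int (vs.dim (KK L j)) - int (vs.dim (II j))" for j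
    have E1: "int (hvec n I (t - 1)) - int (hvec n I t) \<le> k (t - 1)" if "t \<ge> 1" for t
      using C1'(1)[OF L that] unfolding k_def .
    have E2: "int (hvec n I (t - 1)) - int (hvec n I t) = k (t - 1)" if "t \<ge> r + 1" for t
      using C1'(2)[OF L _ propa[OF that]] that unfolding k_def by simp
    have IIKK: "vs.dim (II j) \<le> vs.dim (KK L j)" for j
      using hdim_mono[OF II_KK[OF LP] KK_sub] .
    have RRsub: "RR (s + 1) \<subseteq> I"
    proof -
      have "hvec n I (s + 1) = 0" using socdeg(2) by simp
      then have "vs.dim (II (s + 1)) = vs.dim (RR (s + 1))"
        using hdim_mono[OF II_sub order_refl, of "s + 1"] unfolding hvec_def kdim_vs II_def by simp
      then have "RR (s + 1) \<subseteq> II (s + 1)"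
        using vs.dim_eq_fin_subset[OF II_sub hompart_span_monoms finite_monoms _ subspace_II] by blast
      then show ?thesis unfolding II_def by blast
    qed
    obtain j0 where j0: "\<forall>p\<in>socle_pre n I. p - homcomp j0 p \<in> I" using lev unfolding level_def by blast
    have soc_in: "a \<in> socle_pre n I" if "a \<in> RR s" for a
      unfolding socle_pre_def
    proof (intro CollectI conjI allI impI)
      show "a \<in> polyring n" using that hompart_polyring by blast
      fix i assume "i < n"
      then have "var i * a \<in> RR (s + 1)" using hompart_mult'[OF var_hompart that] by simp
      then show "var i * a \<in> I" using RRsub by blast
    qed
    have "\<not> RR s \<subseteq> I"
    proof
      assume "RR s \<subseteq> I"
      then have "II s = RR s" unfolding II_def by blast
      then show False using socdeg(1) unfolding hvec_def kdim_vs II_def by simp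
    qed
    then obtain p where p: "p \<in> RR s" "p \<notin> I" by blast
    have "j0 = s"
    proof (rule ccontr)
      assume "j0 \<noteq> s"
      moreover have "ishom s p" using p(1) by (simp add: hompart_iff)
      ultimately have "homcomp j0 p = 0" by (simp add: homcomp_other)
      then show False using j0 soc_in[OF p(1)] p(2) by auto
    qed
    have soc: "a \<in> I" if "a \<in> RR j" "j < s" "\<forall>i<n. var i * a \<in> I" for a j
    proof -
      have "a \<in> polyring n" using that(1) by (simp add: hompart_iff)
      then have "a \<in> socle_pre n I" unfolding socle_pre_def using that(3) by blast
      then have h1: "a - homcomp s a \<in> I" using j0 \<open>j0 = s\<close> by blast
      have "ishom j a" using that(1) by (simp add: hompart_iff)
      then have h2: "homcomp s a = 0" using that(2) by (intro homcomp_other) auto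
      show ?thesis using h1 h2 by simp
    qed
    have C2k: "k (t - 1) \<le> (int n - 1) * k t" if "t \<ge> 1" "t \<le> s" for t
    proof -
      have "vs.dim (KK L (t - 1)) \<le> vs.dim (II (t - 1)) + (n - 1) * (vs.dim (KK L t) - vs.dim (II t))"
      proof (rule C2[of 0 c L t])
        show "0 < n" using n1 by simp
        show "c 0 \<noteq> 0" using c(2) by simp
        show "L = linform n c" by (rule L_def)
        show "1 \<le> t" by (rule that(1))
        fix a assume "a \<in> RR (t - 1)" "\<forall>i<n. var i * a \<in> I"
        then show "a \<in> I" using soc[of a "t - 1"] that by simp
      qed
      then have "int (vs.dim (KK L (t - 1))) \<le> int (vs.dim (II (t - 1))) +
           int ((n - 1) * (vs.dim (KK L t) - vs.dim (II t)))" by linarith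
      also have "int ((n - 1) * (vs.dim (KK L t) - vs.dim (II t))) =
           (int n - 1) * (int (vs.dim (KK L t)) - int (vs.dim (II t)))"
        using IIKK[of t] n1 by (simp add: of_nat_diff)
      finally show ?thesis unfolding k_def by simp
    qed
    have kpos: "k j > 0" if "d - 1 \<le> j" "j \<le> s" for j
      using that
    proof (induction j rule: dec_induct)
      case base
      show ?case using E1[OF d1] drop by linarith
    next
      case (step j)
      then have "k j > 0" by simp
      moreover have "k j \<le> (int n - 1) * k (j + 1)" using C2k[of "j + 1"] step by simp
      ultimately have "(int n - 1) * k (j + 1) > 0" by linarith
      then show ?case using n1 by (simp add: zero_less_mult_iff)
    qed
    have partA: "hvec n I (t - 1) > hvec n I t" if "d \<le> t" "t \<le> s" for t
    proof (cases "t = d")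
      case True then show ?thesis using drop by simp
    next
      case False
      then have "t \<ge> r + 1" using that dr r_def by simp
      then have "int (hvec n I (t - 1)) - int (hvec n I t) = k (t - 1)" by (rule E2)
      moreover have "k (t - 1) > 0" using kpos[of "t - 1"] that False by simp
      ultimately show ?thesis by simp
    qed
    have partB: "int (hvec n I (t - 1)) - int (hvec n I t)
             \<le> (int n - 1) * (int (hvec n I t) - int (hvec n I (t + 1)))" if "d \<le> t" "t \<le> s" for t
    proof -
      have "int (hvec n I (t - 1)) - int (hvec n I t) \<le> k (t - 1)" using E1 that d1 by simp
      also have "\<dots> \<le> (int n - 1) * k t" using C2k that d1 by simp
      also have "k t = int (hvec n I t) - int (hvec n I (t + 1))"
        using E2[of "t + 1"] that dr r_def by simp
      finally show ?thesis .
    qed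
    show ?thesis using partA partB socdeg(1) by blast
  qed
qed

end
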